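(* Let $n\ge 1$ be an integer and suppose that $A\subseteq\mathbb{Z}_5^n$ is sum-free. If $|A|>\frac32\cdot5^{n-1}$, then for every maximal proper subgroup $H$ of $\mathbb{Z}_5^n$, the number of $H$-cosets having non-empty intersection with $A$ is not exactly three.
   Context: $\mathbb{Z}_5^n$ denotes the elementary abelian $5$-group of rank $n$. A subset $S$ of an abelian group is sum-free if there are no $x,y,z\in S$ (not necessarily distinct) with $x+y=z$. *)

theory Defs
  imports "HOL-Analysis.Analysis" "HOL-Library.Numeral_Type"
begin

text \<open>Z_5^n is modelled as the type 5 ^ 'n (vectors over Z/5Z indexed by a finite type
 with CARD('n) = n elements), with its additive group structure.\<close>

definition sum_free :: "'a::ab_group_add set \<Rightarrow> bool" where
  "sum_free S \<longleftrightarrow> (\<forall>x\<in>S. \<forall>y\<in>S. \<forall>z\<in>S. x + y \<noteq> z)"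

definition add_subgroup :: "'a::ab_group_add set \<Rightarrow> bool" where
  "add_subgroup H \<longleftrightarrow> 0 \<in> H \<and> (\<forall>x\<in>H. \<forall>y\<in>H. x + y \<in> H) \<and> (\<forall>x\<in>H. - x \<in> H)"

definition maximal_proper_subgroup :: "'a::ab_group_add set \<Rightarrow> bool" where
  "maximal_proper_subgroup H \<longleftrightarrow> add_subgroup H \<and> H \<noteq> UNIV \<and>
     (\<forall>K. add_subgroup K \<and> H \<subseteq> K \<longrightarrow> K = H \<or> K = UNIV)"

definition add_cosets :: "'a::ab_group_add set \<Rightarrow> 'a set set" where
  "add_cosets H = (\<lambda>x. (\<lambda>h. x + h) ` H) ` UNIV"

end

theory Submission
  imports Defs
begin

lemma five_cases: "(x::5) = 0 \<or> x = 1 \<or> x = 2 \<or> x = 3 \<or> x = 4"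
proof (induct x rule: bit1_induct)
  case (of_int z)
  then have "z = 0 \<or> z = 1 \<or> z = 2 \<or> z = 3 \<or> z = 4" by auto
  then show ?case by auto
qed

lemma five_triple:
  "(x::5) \<noteq> 0 \<Longrightarrow> y \<noteq> 0 \<Longrightarrow> z \<noteq> 0 \<Longrightarrow> x \<noteq> y \<Longrightarrow> y \<noteq> z \<Longrightarrow> x \<noteq> z
   \<Longrightarrow> x + y = z \<or> x + z = y \<or> y + z = x"
  using five_cases[of x] five_cases[of y] five_cases[of z] by auto

lemma five_inv: "(t::5) \<noteq> 0 \<Longrightarrow> \<exists>u. u * t = 1"
  using five_cases[of t] by (auto intro: exI[of _ 1] exI[of _ 2] exI[of _ 3] exI[of _ 4])

lemma nat3: "(p::nat) + q \<le> m \<Longrightarrow> p + r \<le> m \<Longrightarrow> q + r \<le> m \<Longrightarrow> 2 * (p + q + r) \<le> 3 * m"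
  by arith

lemma nat3b: "(p::nat) + q \<le> m \<Longrightarrow> q + q \<le> m \<Longrightarrow> r + r \<le> m \<Longrightarrow> 2 * (p + q + r) \<le> 3 * m"
  by arith

lemma comb0:
  fixes a :: "5 \<Rightarrow> nat"
  assumes T: "T = {0, y, z}" and d: "0 \<noteq> y" "y \<noteq> z" "0 \<noteq> z"
    and P1: "\<And>i j. i \<in> T \<Longrightarrow> j \<in> T \<Longrightarrow> i + j \<in> T \<Longrightarrow> a i + a j \<le> m"
    and P2: "\<And>i j. i \<in> T \<Longrightarrow> j \<in> T \<Longrightarrow> i + j \<in> T \<Longrightarrow> a i + a (i + j) \<le> m"
  shows "2 * (a 0 + a y + a z) \<le> 3 * m"
proof -
  have "a 0 + a y \<le> m" using P1[of 0 y] T by simp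
  moreover have "a y + a y \<le> m" using P2[of y 0] T by simp
  moreover have "a z + a z \<le> m" using P2[of z 0] T by simp
  ultimately show ?thesis by (rule nat3b)
qed

lemma combt:
  fixes a :: "5 \<Rightarrow> nat"
  assumes T: "T = {x, y, z}" and s: "x + y = z"
    and P1: "\<And>i j. i \<in> T \<Longrightarrow> j \<in> T \<Longrightarrow> i + j \<in> T \<Longrightarrow> a i + a j \<le> m"
    and P2: "\<And>i j. i \<in> T \<Longrightarrow> j \<in> T \<Longrightarrow> i + j \<in> T \<Longrightarrow> a i + a (i + j) \<le> m"
  shows "2 * (a x + a y + a z) \<le> 3 * m"
proof -
  have "a x + a y \<le> m" using P1[of x y] T s by simp
  moreover have "a x + a z \<le> m" using P2[of x y] T s by simp
  moreover have "a y + a z \<le> m" using P2[of y x] T s by (simp add: add.commute)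
  ultimately show ?thesis by (rule nat3)
qed

lemma comb:
  fixes a :: "5 \<Rightarrow> nat"
  assumes T: "T = {x, y, z}" and d: "x \<noteq> y" "y \<noteq> z" "x \<noteq> z"
    and P1: "\<And>i j. i \<in> T \<Longrightarrow> j \<in> T \<Longrightarrow> i + j \<in> T \<Longrightarrow> a i + a j \<le> m"
    and P2: "\<And>i j. i \<in> T \<Longrightarrow> j \<in> T \<Longrightarrow> i + j \<in> T \<Longrightarrow> a i + a (i + j) \<le> m"
  shows "2 * (a x + a y + a z) \<le> 3 * m"
proof (cases "x = 0 \<or> y = 0 \<or> z = 0")
  case True
  then show ?thesis
  proof (elim disjE)
    assume "x = 0" then show ?thesis using comb0[of T y z a m] T d P1 P2 by auto
  next
    assume "y = 0" then show ?thesis using comb0[of T x z a m] T d P1 P2 by (auto simp: insert_commute)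
  next
    assume "z = 0" then show ?thesis using comb0[of T x y a m] T d P1 P2 by (auto simp: insert_commute)
  qed
next
  case False
  then have "x + y = z \<or> x + z = y \<or> y + z = x" using five_triple d by auto
  then show ?thesis
  proof (elim disjE)
    assume "x + y = z" then show ?thesis using combt[of T x y z a m] T P1 P2 by auto
  next
    assume "x + z = y" then show ?thesis using combt[of T x z y a m] T P1 P2 by (auto simp: insert_commute)
  next
    assume "y + z = x" then show ?thesis using combt[of T y z x a m] T P1 P2 by (auto simp: insert_commute)
  qed
qed

lemma sub_diff: "add_subgroup H \<Longrightarrow> x \<in> H \<Longrightarrow> y \<in> H \<Longrightarrow> x - y \<in> H"
  unfolding add_subgroup_def by (metis diff_conv_add_uminus)

lemma smult_nat_mem:
  assumes "add_subgroup H" "h \<in> H"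
  shows "of_nat k *s (h::5^'n) \<in> H"
proof (induct k)
  case 0 then show ?case using assms by (simp add: add_subgroup_def)
next
  case (Suc k)
  have "of_nat (Suc k) *s h = of_nat k *s h + h"
    by (simp add: vector_sadd_rdistrib)
  then show ?case using Suc assms by (simp add: add_subgroup_def)
qed

lemma smult_mem:
  assumes "add_subgroup H" "h \<in> H"
  shows "(t::5) *s (h::5^'n) \<in> H"
proof -
  have "\<exists>k. t = of_nat k"
    using five_cases[of t] by (auto intro: exI[of _ 0] exI[of _ 1] exI[of _ 2] exI[of _ 3] exI[of _ 4])
  then show ?thesis using smult_nat_mem[OF assms] by auto
qed

lemma unique_coeff:
  assumes "add_subgroup H" "(g::5^'n) \<notin> H" "t *s g \<in> H"
  shows "t = 0"
proof (rule ccontr)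
  assume "t \<noteq> 0"
  then obtain u where u: "u * t = 1" using five_inv by blast
  have "u *s (t *s g) \<in> H" using smult_mem assms by blast
  then have "g \<in> H" using u by simp
  then show False using assms by simp
qed

lemma exists_coeff:
  assumes "maximal_proper_subgroup H" "(g::5^'n) \<notin> H"
  shows "\<exists>t. x - t *s g \<in> H"
proof -
  have sg: "add_subgroup H" using assms unfolding maximal_proper_subgroup_def by simp
  define K where "K = {h + t *s g | h t. h \<in> H}"
  have "add_subgroup K"
    unfolding add_subgroup_def
  proof (intro conjI ballI)
    show "0 \<in> K" unfolding K_def using sg
      by (auto simp: add_subgroup_def intro!: exI[of _ 0])
  next
    fix x y assume "x \<in> K" "y \<in> K"
    then obtain h1 t1 h2 t2 where "x = h1 + t1 *s g" "y = h2 + t2 *s g" "h1 \<in> H" "h2 \<in> H"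
      unfolding K_def by blast
    then have "x + y = (h1 + h2) + (t1 + t2) *s g" "h1 + h2 \<in> H"
      using sg by (auto simp: vector_sadd_rdistrib add_subgroup_def algebra_simps)
    then show "x + y \<in> K" unfolding K_def by blast
  next
    fix x assume "x \<in> K"
    then obtain h1 t1 where "x = h1 + t1 *s g" "h1 \<in> H"
      unfolding K_def by blast
    then have "- x = (- h1) + (- t1) *s g" "- h1 \<in> H"
      using sg by (auto simp: add_subgroup_def vec_eq_iff)
    then show "- x \<in> K" unfolding K_def by blast
  qed
  moreover have "H \<subseteq> K"
  proof
    fix h assume "h \<in> H"
    moreover have "h = h + 0 *s g" by simp
    ultimately show "h \<in> K" unfolding K_def by blast
  qed
  moreover have "g \<in> K"
  proof -
    have "g = 0 + 1 *s g" by simp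
    moreover have "(0::5^'n) \<in> H" using sg by (simp add: add_subgroup_def)
    ultimately show ?thesis unfolding K_def by blast
  qed
  ultimately have "K = UNIV" using assms unfolding maximal_proper_subgroup_def by blast
  then have "x \<in> K" by simp
  then obtain h t where "x = h + t *s g" "h \<in> H" unfolding K_def by blast
  then show ?thesis by (intro exI[of _ t]) simp
qed

theorem proposition1:
  fixes A :: "(5 ^ 'n) set"
  assumes "sum_free A"
    and "real (card A) > 3 / 2 * 5 ^ (CARD('n) - 1)"
    and "maximal_proper_subgroup H"
  shows "card {C \<in> add_cosets H. C \<inter> A \<noteq> {}} \<noteq> 3"
proof
  assume card3: "card {C \<in> add_cosets H. C \<inter> A \<noteq> {}} = 3"
  have sg: "add_subgroup H" using assms(3) unfolding maximal_proper_subgroup_def by simp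
  obtain g where g: "g \<notin> H" using assms(3) unfolding maximal_proper_subgroup_def by blast
  define phi where "phi x = (SOME t. x - t *s g \<in> H)" for x
  have phi: "x - phi x *s g \<in> H" for x
    unfolding phi_def using exists_coeff[OF assms(3) g] by (rule someI_ex)
  have phi_iff: "phi x = t \<longleftrightarrow> x - t *s g \<in> H" for x t
  proof
    assume "x - t *s g \<in> H"
    then have "(x - t *s g) - (x - phi x *s g) \<in> H" using sub_diff[OF sg] phi by blast
    moreover have "(x - t *s g) - (x - phi x *s g) = (phi x - t) *s g"
      by (simp add: vec_eq_iff algebra_simps)
    ultimately have "(phi x - t) *s g \<in> H" by metis
    then have "phi x - t = 0" using unique_coeff[OF sg g] by blast
    then show "phi x = t" by simp
  qed (use phi in auto)
  have phi0: "phi x = 0 \<longleftrightarrow> x \<in> H" for x using phi_iff[of x 0] by simp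
  have phi_add: "phi (x + y) = phi x + phi y" for x y
  proof -
    have "(x - phi x *s g) + (y - phi y *s g) \<in> H" using sg phi unfolding add_subgroup_def by blast
    moreover have "(x - phi x *s g) + (y - phi y *s g) = (x + y) - (phi x + phi y) *s g"
      by (simp add: vec_eq_iff algebra_simps)
    ultimately show ?thesis using phi_iff by simp
  qed
  have phi_diff: "phi (x - y) = phi x - phi y" for x y
  proof -
    have "(x - phi x *s g) - (y - phi y *s g) \<in> H" using sub_diff[OF sg] phi by blast
    moreover have "(x - phi x *s g) - (y - phi y *s g) = (x - y) - (phi x - phi y) *s g"
      by (simp add: vec_eq_iff algebra_simps)
    ultimately show ?thesis using phi_iff by simp
  qed
  have phi_s: "phi (t *s g) = t" for t using phi_iff[of "t *s g" t] sg
    by (simp add: add_subgroup_def)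
  define F where "F t = {x. phi x = t}" for t
  define m where "m = card H"
  have cardF: "card (F t) = m" for t
  proof -
    have "F t = (\<lambda>h. h + t *s g) ` H"
    proof (intro set_eqI iffI)
      fix x assume "x \<in> F t"
      then have "x - t *s g \<in> H" using phi_iff unfolding F_def by simp
      then show "x \<in> (\<lambda>h. h + t *s g) ` H" by (intro image_eqI[of _ _ "x - t *s g"]) auto
    next
      fix x assume "x \<in> (\<lambda>h. h + t *s g) ` H"
      then show "x \<in> F t" using phi_iff unfolding F_def by auto
    qed
    moreover have "inj_on (\<lambda>h. h + t *s g) H" by (auto intro: inj_onI)
    ultimately show ?thesis unfolding m_def by (simp add: card_image)
  qed
  have cosets: "{C \<in> add_cosets H. C \<inter> A \<noteq> {}} = F ` (phi ` A)"
  proof -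
    have co: "(\<lambda>h. x + h) ` H = F (phi x)" for x
    proof (intro set_eqI iffI)
      fix y assume "y \<in> (\<lambda>h. x + h) ` H"
      then obtain h where "h \<in> H" "y = x + h" by blast
      then show "y \<in> F (phi x)" unfolding F_def using phi0 phi_add by simp
    next
      fix y assume "y \<in> F (phi x)"
      then have "phi (y - x) = 0" unfolding F_def using phi_diff by simp
      then have "y - x \<in> H" using phi0 by simp
      then show "y \<in> (\<lambda>h. x + h) ` H" by (intro image_eqI[of _ _ "y - x"]) auto
    qed
    have "add_cosets H = F ` UNIV"
    proof
      show "add_cosets H \<subseteq> F ` UNIV" unfolding add_cosets_def using co by auto
      show "F ` UNIV \<subseteq> add_cosets H"
      proof
        fix C assume "C \<in> F ` UNIV"
        then obtain t where "C = F t" by blast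
        then have "C = (\<lambda>h. t *s g + h) ` H" using co[of "t *s g"] phi_s by simp
        then show "C \<in> add_cosets H" unfolding add_cosets_def by blast
      qed
    qed
    then show ?thesis unfolding F_def by auto
  qed
  have injF: "inj_on F X" for X
  proof (rule inj_onI)
    fix s t assume "F s = F t"
    moreover have "s *s g \<in> F s" unfolding F_def using phi_s by simp
    ultimately have "s *s g \<in> F t" by simp
    then show "s = t" unfolding F_def using phi_s by simp
  qed
  have card3': "card (phi ` A) = 3" using card3 cosets card_image[OF injF] by simp
  have finU: "finite (UNIV::(5^'n) set)" by simp
  have e1: "card (UNIV::(5^'n) set) = (\<Sum>t\<in>phi ` UNIV. card {x \<in> UNIV. phi x = t})"
    using sum.image_gen[OF finU, of "\<lambda>_. 1::nat" phi]
    by (simp only: card_eq_sum)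
  have e2: "phi ` UNIV = UNIV" using phi_s by (metis surj_def)
  have e3: "(\<Sum>t\<in>(UNIV::5 set). card {x \<in> UNIV. phi x = t}) = (\<Sum>t\<in>(UNIV::5 set). m)"
    using cardF unfolding F_def by (intro sum.cong) auto
  have c5: "CARD(5) = 5" by simp
  have "card (UNIV::(5^'n) set) = (\<Sum>t\<in>(UNIV::5 set). m)" using e1 e2 e3 by (simp only:)
  also have "\<dots> = CARD(5) * m" by (simp only: sum_constant of_nat_id)
  finally have "card (UNIV::(5^'n) set) = 5 * m" by (simp only: c5)
  then have m5: "5 ^ CARD('n) = 5 * m" by (simp only: CARD_vec c5)
  have pos: "CARD('n) > 0" by (rule finite_UNIV_card_ge_0) simp
  then obtain k where k: "CARD('n) = Suc k" using gr0_implies_Suc by blast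
  have "(5::nat) * m = 5 * 5 ^ k" using m5 unfolding k by (simp only: power_Suc)
  then have "m = 5 ^ k" by (simp only: mult_cancel_left) simp
  then have m_eq: "m = 5 ^ (CARD('n) - 1)" unfolding k by (simp only: diff_Suc_1)
  define a where "a t = card {x \<in> A. phi x = t}" for t
  have cardA: "card A = (\<Sum>t\<in>phi ` A. a t)"
    using sum.image_gen[of A "\<lambda>_. 1::nat" phi] unfolding a_def by simp
  have sf: "x \<in> A \<Longrightarrow> y \<in> A \<Longrightarrow> x + y \<notin> A" for x y
    using assms(1) unfolding sum_free_def by blast
  have finF: "finite (F t)" for t by simp
  have finS: "finite (S::(5^'n) set)" for S by simp
  have P1: "a i + a j \<le> m" if hij: "i \<in> phi ` A" "j \<in> phi ` A" "i + j \<in> phi ` A" for i j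
  proof -
    obtain c where c: "c \<in> A" "phi c = i + j" using hij(3) by (metis imageE)
    define X where "X = {x \<in> A. phi x = i}"
    define Y where "Y = (\<lambda>y. c - y) ` {y \<in> A. phi y = j}"
    have inj: "inj_on (\<lambda>y. c - y) {y \<in> A. phi y = j}" by (rule inj_onI) simp
    have cY: "card Y = a j" unfolding Y_def a_def using inj by (rule card_image)
    have dis: "X \<inter> Y = {}"
    proof (rule ccontr)
      assume "X \<inter> Y \<noteq> {}"
      then obtain y where "y \<in> A" "c - y \<in> A" unfolding X_def Y_def by blast
      moreover have "(c - y) + y = c" by simp
      ultimately show False using sf[of "c - y" y] c(1) by metis
    qed
    have XF: "X \<subseteq> F i" unfolding X_def F_def by blast
    have YF: "Y \<subseteq> F i"
    proof
      fix w assume "w \<in> Y"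
      then obtain y where y: "y \<in> A" "phi y = j" "w = c - y" unfolding Y_def by blast
      have "phi w = phi c - phi y" using y(3) phi_diff by simp
      also have "\<dots> = i" using c(2) y(2) by simp
      finally show "w \<in> F i" unfolding F_def by simp
    qed
    have "card (X \<union> Y) \<le> card (F i)" using XF YF by (intro card_mono[OF finF]) blast
    moreover have "card (X \<union> Y) = card X + card Y" using dis finS by (intro card_Un_disjoint) auto
    ultimately have "card X + card Y \<le> m" using cardF by simp
    then show ?thesis using cY unfolding X_def a_def by simp
  qed
  have P2: "a i + a (i + j) \<le> m" if hij: "i \<in> phi ` A" "j \<in> phi ` A" "i + j \<in> phi ` A" for i j
  proof -
    obtain b where b: "b \<in> A" "phi b = j" using hij(2) by (metis imageE)
    define Z where "Z = {x \<in> A. phi x = i + j}"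
    define Y where "Y = (\<lambda>y. y + b) ` {y \<in> A. phi y = i}"
    have inj: "inj_on (\<lambda>y. y + b) {y \<in> A. phi y = i}" by (rule inj_onI) simp
    have cY: "card Y = a i" unfolding Y_def a_def using inj by (rule card_image)
    have dis: "Z \<inter> Y = {}"
    proof (rule ccontr)
      assume "Z \<inter> Y \<noteq> {}"
      then obtain y where "y \<in> A" "y + b \<in> A" unfolding Z_def Y_def by blast
      then show False using sf[of y b] b(1) by blast
    qed
    have ZF: "Z \<subseteq> F (i + j)" unfolding Z_def F_def by blast
    have YF: "Y \<subseteq> F (i + j)"
    proof
      fix w assume "w \<in> Y"
      then obtain y where y: "y \<in> A" "phi y = i" "w = y + b" unfolding Y_def by blast
      have "phi w = phi y + phi b" using y(3) phi_add by simp
      also have "\<dots> = i + j" using b(2) y(2) by simp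
      finally show "w \<in> F (i + j)" unfolding F_def by simp
    qed
    have "card (Z \<union> Y) \<le> card (F (i + j))" using ZF YF by (intro card_mono[OF finF]) blast
    moreover have "card (Z \<union> Y) = card Z + card Y" using dis finS by (intro card_Un_disjoint) auto
    ultimately have "card Z + card Y \<le> m" using cardF by simp
    then show ?thesis using cY unfolding Z_def a_def by simp
  qed
  obtain x y z where xyz: "phi ` A = {x, y, z}" "x \<noteq> y" "y \<noteq> z" "x \<noteq> z"
    using card3' card_3_iff by metis
  have "2 * (a x + a y + a z) \<le> 3 * m"
    by (rule comb[OF xyz P1 P2])
  moreover have "card A = a x + a y + a z" using cardA xyz by simp
  ultimately have "2 * card A \<le> 3 * m" by (simp only:)
  then have r1: "real (2 * card A) \<le> real (3 * m)" by (simp only: of_nat_le_iff)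
  have r2: "real m = 5 ^ (CARD('n) - 1)" using m_eq by (simp only: of_nat_power of_nat_numeral)
  have r3: "real (2 * card A) = 2 * real (card A)" "real (3 * m) = 3 * real m" by simp_all
  show False using r1 r2 r3 assms(2) by linarith
qed

end
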